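(* Let $a,b,c$ be positive integers and define the formal power series \begin{alignat*}{2} F_p(x,y)&=\sum_{m,n\geq 0}\zeta_p(\{a\}^m,b,\{c\}^n)x^my^n, & G_p(y)&=\sum_{n\geq0}\zeta_p(\{c\}^n)y^n,\\ F^\star_p(x,y)&=\sum_{m,n\geq 0}\zeta^\star_p(\{c\}^m,b,\{a\}^n)x^my^n, & G^\star_p(y)&=\sum_{n\geq0}\zeta^\star_p(\{a\}^n)y^n. \end{alignat*} For $q\geq 1$ put \[T_q=\begin{pmatrix}1+\frac{x}{q^a} & \frac{1}{q^b}\\ 0 & 1+\frac{y}{q^c}\end{pmatrix},\qquad U_q=\Bigl(1-\frac{x}{q^c}\Bigr)^{-1}\Bigl(1-\frac{y}{q^a}\Bigr)^{-1}\begin{pmatrix}1-\frac{y}{q^a} & \frac{1}{q^b}\\ 0 & 1-\frac{x}{q^c}\end{pmatrix}.\] Then for every integer $p\geq 0$, \[\begin{pmatrix}F_p(x,y)\\ G_p(y)\end{pmatrix}=T_pT_{p-1}\cdots T_1\begin{pmatrix}0\\1\end{pmatrix},\qquad \begin{pmatrix}F^\star_p(x,y)\\ G^\star_p(y)\end{pmatrix}=U_pU_{p-1}\cdots U_1\begin{pmatrix}0\\1\end{pmatrix}\] (for $p=0$ the products are empty, i.e. the identity matrix).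
   Context: For an integer $p\geq 0$ and positive integers $k_1,\ldots,k_n$, the truncated sums are $\zeta_p(k_1,\ldots,k_n)=\sum_{p\geq p_1>p_2>\cdots>p_n>0}p_1^{-k_1}\cdots p_n^{-k_n}$ and $\zeta^\star_p(k_1,\ldots,k_n)=\sum_{p\geq p_1\geq p_2\geq\cdots\geq p_n\geq 1}p_1^{-k_1}\cdots p_n^{-k_n}$; empty sums are $0$, and for the empty index $\zeta_p(\varnothing)=\zeta^\star_p(\varnothing)=1$ (also when $p=0$). $\{a\}^m$ denotes $m$ copies of $a$. The factors $(1-x/q^c)^{-1}$ etc. are understood as formal power series. *)

theory Defs
  imports "HOL-Analysis.Analysis" "HOL-Computational_Algebra.Formal_Power_Series"
begin

definition zeta_tr :: "nat \<Rightarrow> nat list \<Rightarrow> real" where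
  "zeta_tr p ks = (\<Sum>ps \<in> {ps. length ps = length ks \<and> (\<forall>i<length ps. 0 < ps!i \<and> ps!i \<le> p)
                        \<and> sorted_wrt (>) ps}.
                     \<Prod>i<length ks. 1 / real (ps!i) ^ (ks!i))"

definition zetas_tr :: "nat \<Rightarrow> nat list \<Rightarrow> real" where
  "zetas_tr p ks = (\<Sum>ps \<in> {ps. length ps = length ks \<and> (\<forall>i<length ps. 1 \<le> ps!i \<and> ps!i \<le> p)
                        \<and> sorted_wrt (\<ge>) ps}.
                     \<Prod>i<length ks. 1 / real (ps!i) ^ (ks!i))"

text \<open>Bivariate formal power series in x, y: outer variable x, inner variable y.\<close>
type_synonym bfps = "real fps fps"

definition bX :: bfps where "bX = fps_X"
definition bY :: bfps where "bY = fps_const fps_X"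
definition bconst :: "real \<Rightarrow> bfps" where "bconst r = fps_const (fps_const r)"

definition bseries :: "(nat \<Rightarrow> nat \<Rightarrow> real) \<Rightarrow> bfps" where
  "bseries f = Abs_fps (\<lambda>m. Abs_fps (\<lambda>n. f m n))"

definition Fser :: "nat \<Rightarrow> nat \<Rightarrow> nat \<Rightarrow> nat \<Rightarrow> bfps" where
  "Fser a b c p = bseries (\<lambda>m n. zeta_tr p (replicate m a @ [b] @ replicate n c))"
definition Gser :: "nat \<Rightarrow> nat \<Rightarrow> bfps" where
  "Gser c p = bseries (\<lambda>m n. if m = 0 then zeta_tr p (replicate n c) else 0)"
definition Fsser :: "nat \<Rightarrow> nat \<Rightarrow> nat \<Rightarrow> nat \<Rightarrow> bfps" where
  "Fsser a b c p = bseries (\<lambda>m n. zetas_tr p (replicate m c @ [b] @ replicate n a))"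
definition Gsser :: "nat \<Rightarrow> nat \<Rightarrow> bfps" where
  "Gsser a p = bseries (\<lambda>m n. if m = 0 then zetas_tr p (replicate n a) else 0)"

definition Tmat :: "nat \<Rightarrow> nat \<Rightarrow> nat \<Rightarrow> nat \<Rightarrow> bfps^2^2" where
  "Tmat a b c q = vector [vector [1 + bX * bconst (1 / real q ^ a), bconst (1 / real q ^ b)],
                          vector [0, 1 + bY * bconst (1 / real q ^ c)]]"

definition Umat :: "nat \<Rightarrow> nat \<Rightarrow> nat \<Rightarrow> nat \<Rightarrow> bfps^2^2" where
  "Umat a b c q =
     (let s = inverse (1 - bX * bconst (1 / real q ^ c)) * inverse (1 - bY * bconst (1 / real q ^ a))
      in vector [vector [s * (1 - bY * bconst (1 / real q ^ a)), s * bconst (1 / real q ^ b)],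
                 vector [s * 0, s * (1 - bX * bconst (1 / real q ^ c))]])"

fun matprod_down :: "(nat \<Rightarrow> bfps^2^2) \<Rightarrow> nat \<Rightarrow> bfps^2^2" where
  "matprod_down M 0 = mat 1"
| "matprod_down M (Suc p) = M (Suc p) ** matprod_down M p"

end

theory Submission
  imports Defs
begin

definition LL :: "(nat \<Rightarrow> nat \<Rightarrow> bool) \<Rightarrow> nat \<Rightarrow> nat \<Rightarrow> nat list set" where
  "LL R p n = {ps. length ps = n \<and> set ps \<subseteq> {1..p} \<and> sorted_wrt R ps}"

definition ww :: "nat list \<Rightarrow> nat list \<Rightarrow> real" where
  "ww ks ps = (\<Prod>i<length ks. 1 / real (ps!i) ^ (ks!i))"

lemma zeta_tr_LL: "zeta_tr p ks = sum (ww ks) (LL (>) p (length ks))"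
proof -
  have "{ps. length ps = length ks \<and> (\<forall>i<length ps. 0 < ps!i \<and> ps!i \<le> p) \<and> sorted_wrt (>) ps}
        = LL (>) p (length ks)"
    unfolding LL_def by (auto simp: subset_iff in_set_conv_nth Suc_le_eq)
  then show ?thesis unfolding zeta_tr_def ww_def by simp
qed

lemma zetas_tr_LL: "zetas_tr p ks = sum (ww ks) (LL (\<ge>) p (length ks))"
proof -
  have "{ps. length ps = length ks \<and> (\<forall>i<length ps. 1 \<le> ps!i \<and> ps!i \<le> p) \<and> sorted_wrt (\<ge>) ps}
        = LL (\<ge>) p (length ks)"
    unfolding LL_def by (auto simp: subset_iff in_set_conv_nth)
  then show ?thesis unfolding zetas_tr_def ww_def by simp
qed

lemma LL_finite: "finite (LL R p n)"
  by (rule finite_subset[OF _ finite_lists_length_eq[of "{1..p}" n]]) (auto simp: LL_def)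

lemma LL_0: "LL R p 0 = {[]}"
  by (auto simp: LL_def)

lemma LL_zero_Suc: "LL R 0 (Suc n) = {}"
  by (auto simp: LL_def length_Suc_conv)

lemma ww_Cons: "ww (k#ks) (q#qs) = 1 / real q ^ k * ww ks qs"
  unfolding ww_def by (simp only: length_Cons prod.lessThan_Suc_shift) simp

lemma ww_Nil: "ww [] ps = 1"
  unfolding ww_def by simp

lemma LL_strict_Suc:
  "LL (>) (Suc p) (Suc n) = LL (>) p (Suc n) \<union> Cons (Suc p) ` LL (>) p n"
proof (intro equalityI subsetI)
  fix ps assume "ps \<in> LL (>) (Suc p) (Suc n)"
  then obtain q qs where ps: "ps = q # qs" and l: "length qs = n" and s: "set (q#qs) \<subseteq> {1..Suc p}"
    and so: "sorted_wrt (>) (q#qs)"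
    unfolding LL_def by (auto simp: length_Suc_conv)
  show "ps \<in> LL (>) p (Suc n) \<union> Cons (Suc p) ` LL (>) p n"
  proof (cases "q = Suc p")
    case True
    then have "qs \<in> LL (>) p n" using l s so by (fastforce simp: LL_def)
    then show ?thesis using ps True by auto
  next
    case False
    then have "q \<le> p" using s by auto
    then have "ps \<in> LL (>) p (Suc n)" using l s so ps by (fastforce simp: LL_def)
    then show ?thesis by auto
  qed
next
  fix ps assume "ps \<in> LL (>) p (Suc n) \<union> Cons (Suc p) ` LL (>) p n"
  then show "ps \<in> LL (>) (Suc p) (Suc n)"
    by (fastforce simp: LL_def)
qed

lemma LL_weak_Suc:
  "LL (\<ge>) (Suc p) (Suc n) = LL (\<ge>) p (Suc n) \<union> Cons (Suc p) ` LL (\<ge>) (Suc p) n"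
proof (intro equalityI subsetI)
  fix ps assume "ps \<in> LL (\<ge>) (Suc p) (Suc n)"
  then obtain q qs where ps: "ps = q # qs" and l: "length qs = n" and s: "set (q#qs) \<subseteq> {1..Suc p}"
    and so: "sorted_wrt (\<ge>) (q#qs)"
    unfolding LL_def by (auto simp: length_Suc_conv)
  show "ps \<in> LL (\<ge>) p (Suc n) \<union> Cons (Suc p) ` LL (\<ge>) (Suc p) n"
  proof (cases "q = Suc p")
    case True
    then have "qs \<in> LL (\<ge>) (Suc p) n" using l s so by (fastforce simp: LL_def)
    then show ?thesis using ps True by auto
  next
    case False
    then have "q \<le> p" using s by auto
    then have "ps \<in> LL (\<ge>) p (Suc n)" using l s so ps by (fastforce simp: LL_def)
    then show ?thesis by auto
  qed
next
  fix ps assume "ps \<in> LL (\<ge>) p (Suc n) \<union> Cons (Suc p) ` LL (\<ge>) (Suc p) n"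
  then show "ps \<in> LL (\<ge>) (Suc p) (Suc n)"
    by (fastforce simp: LL_def)
qed

lemma disj_aux: "LL R p (Suc n) \<inter> Cons (Suc p) ` A = {}"
  by (auto simp: LL_def)

lemma zeta_nil: "zeta_tr p [] = 1"
  by (simp add: zeta_tr_LL LL_0 ww_Nil)

lemma zetas_nil: "zetas_tr p [] = 1"
  by (simp add: zetas_tr_LL LL_0 ww_Nil)

lemma zeta_zero_cons: "zeta_tr 0 (k#ks) = 0"
  by (simp add: zeta_tr_LL LL_zero_Suc)

lemma zeta_zero_ne: "ks \<noteq> [] \<Longrightarrow> zeta_tr 0 ks = 0"
  by (auto simp: neq_Nil_conv zeta_zero_cons)

lemma zetas_zero_cons: "zetas_tr 0 (k#ks) = 0"
  by (simp add: zetas_tr_LL LL_zero_Suc)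

lemma zeta_Suc_cons:
  "zeta_tr (Suc p) (k#ks) = zeta_tr p (k#ks) + 1 / real (Suc p) ^ k * zeta_tr p ks"
proof -
  have "zeta_tr (Suc p) (k#ks) = sum (ww (k#ks)) (LL (>) p (Suc (length ks)))
        + sum (ww (k#ks)) (Cons (Suc p) ` LL (>) p (length ks))"
    unfolding zeta_tr_LL by (simp add: LL_strict_Suc sum.union_disjoint LL_finite disj_aux)
  also have "sum (ww (k#ks)) (Cons (Suc p) ` LL (>) p (length ks))
      = 1 / real (Suc p) ^ k * zeta_tr p ks"
    by (simp add: sum.reindex ww_Cons sum_distrib_left zeta_tr_LL del: of_nat_Suc fps_mult_nth_0)
  finally show ?thesis by (simp add: zeta_tr_LL del: of_nat_Suc fps_mult_nth_0)
qed

lemma zetas_zero_ne: "ks \<noteq> [] \<Longrightarrow> zetas_tr 0 ks = 0"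
  by (auto simp: neq_Nil_conv zetas_zero_cons)

lemma zetas_Suc_cons:
  "zetas_tr (Suc p) (k#ks) = zetas_tr p (k#ks) + 1 / real (Suc p) ^ k * zetas_tr (Suc p) ks"
proof -
  have "zetas_tr (Suc p) (k#ks) = sum (ww (k#ks)) (LL (\<ge>) p (Suc (length ks)))
        + sum (ww (k#ks)) (Cons (Suc p) ` LL (\<ge>) (Suc p) (length ks))"
    unfolding zetas_tr_LL by (simp add: LL_weak_Suc sum.union_disjoint LL_finite disj_aux)
  also have "sum (ww (k#ks)) (Cons (Suc p) ` LL (\<ge>) (Suc p) (length ks))
      = 1 / real (Suc p) ^ k * zetas_tr (Suc p) ks"
    by (simp add: sum.reindex ww_Cons sum_distrib_left zetas_tr_LL del: of_nat_Suc fps_mult_nth_0)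
  finally show ?thesis by (simp add: zetas_tr_LL del: of_nat_Suc fps_mult_nth_0)
qed


lemma bseries_nth [simp]: "fps_nth (fps_nth (bseries f) m) n = f m n"
  by (simp add: bseries_def)

lemma bfps_eqI: "(\<And>m n. fps_nth (fps_nth ((A::bfps)) m) n = fps_nth (fps_nth (B) m) n) \<Longrightarrow> A = B"
  by (rule fps_ext, rule fps_ext) simp

lemma bX_mult_nth [simp]: "fps_nth (fps_nth ((bX * A)) m) n = (if m = 0 then 0 else fps_nth (fps_nth A (m - 1)) n)"
  by (simp add: bX_def)

lemma bY_mult_nth [simp]: "fps_nth (fps_nth ((bY * A)) m) n = (if n = 0 then 0 else fps_nth (fps_nth A m) (n - 1))"
  by (simp add: bY_def)

lemma bconst_mult_nth [simp]: "fps_nth (fps_nth ((bconst r * A)) m) n = r * fps_nth (fps_nth (A) m) n"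
  by (simp add: bconst_def)

lemma bone_nth [simp]: "fps_nth (fps_nth ((1::bfps)) m) n = (if m = 0 \<and> n = 0 then 1 else 0)"
  by simp

lemma mv2: "(vector [vector [a, b], vector [c, d]] :: 'a::semiring_1 ^2^2) *v vector [u, v]
    = vector [a * u + b * v, c * u + d * v]"
  by (simp add: vec_eq_iff forall_2 matrix_vector_mult_def sum_2)

lemma binv: "fps_nth (fps_nth (f::bfps) 0) 0 \<noteq> 0 \<Longrightarrow> f * inverse f = 1"
  using fps_right_inverse[of f "inverse (fps_nth f 0)"] inverse_mult_eq_1'[of "fps_nth f 0"]
  by (simp add: fps_inverse_def)

lemma binv': "fps_nth (fps_nth (f::bfps) 0) 0 \<noteq> 0 \<Longrightarrow> inverse f * f = 1"
  using binv by (simp add: mult.commute)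

lemma F_step: "Fser a b c (Suc p) = (1 + bX * bconst (1 / real (Suc p) ^ a)) * Fser a b c p
   + bconst (1 / real (Suc p) ^ b) * Gser c p"
proof (rule bfps_eqI)
  fix m n
  show "fps_nth (fps_nth (Fser a b c (Suc p)) m) n = fps_nth (fps_nth (((1 + bX * bconst (1 / real (Suc p) ^ a)) * Fser a b c p
   + bconst (1 / real (Suc p) ^ b) * Gser c p)) m) n"
    by (cases m) (simp_all add: Fser_def Gser_def ring_distribs mult.assoc zeta_Suc_cons del: of_nat_Suc fps_mult_nth_0)
qed

lemma G_step: "Gser c (Suc p) = 0 * Fser a b c p + (1 + bY * bconst (1 / real (Suc p) ^ c)) * Gser c p"
proof (rule bfps_eqI)
  fix m n
  show "fps_nth (fps_nth (Gser c (Suc p)) m) n = fps_nth (fps_nth ((0 * Fser a b c p + (1 + bY * bconst (1 / real (Suc p) ^ c)) * Gser c p)) m) n"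
    by (cases n) (simp_all add: Gser_def ring_distribs mult.assoc zeta_Suc_cons zeta_nil del: of_nat_Suc fps_mult_nth_0)
qed

lemma Gs_step: "(1 - bY * bconst (1 / real (Suc p) ^ a)) * Gsser a (Suc p) = Gsser a p"
proof (rule bfps_eqI)
  fix m n
  show "fps_nth (fps_nth (((1 - bY * bconst (1 / real (Suc p) ^ a)) * Gsser a (Suc p))) m) n = fps_nth (fps_nth (Gsser a p) m) n"
    by (cases n) (simp_all add: Gsser_def ring_distribs mult.assoc
        zetas_Suc_cons zetas_nil del: of_nat_Suc fps_mult_nth_0)
qed

lemma Fs_step: "(1 - bX * bconst (1 / real (Suc p) ^ c)) * Fsser a b c (Suc p)
   = Fsser a b c p + bconst (1 / real (Suc p) ^ b) * Gsser a (Suc p)"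
proof (rule bfps_eqI)
  fix m n
  show "fps_nth (fps_nth (((1 - bX * bconst (1 / real (Suc p) ^ c)) * Fsser a b c (Suc p))) m) n
   = fps_nth (fps_nth ((Fsser a b c p + bconst (1 / real (Suc p) ^ b) * Gsser a (Suc p))) m) n"
    by (cases m) (simp_all add: Fsser_def Gsser_def ring_distribs mult.assoc zetas_Suc_cons del: of_nat_Suc fps_mult_nth_0)
qed

lemma base_T: "vector [Fser a b c 0, Gser c 0] = (vector [0, 1] :: bfps^2)"
proof -
  have "Fser a b c 0 = 0"
    by (rule bfps_eqI) (simp add: Fser_def zeta_zero_ne)
  moreover have "Gser c 0 = 1"
    by (rule bfps_eqI) (auto simp: Gser_def zeta_nil neq0_conv intro!: zeta_zero_cons
         dest!: gr0_implies_Suc)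
  ultimately show ?thesis by simp
qed


lemma base_U: "vector [Fsser a b c 0, Gsser a 0] = (vector [0, 1] :: bfps^2)"
proof -
  have "Fsser a b c 0 = 0"
    by (rule bfps_eqI) (simp add: Fsser_def zetas_zero_ne)
  moreover have "Gsser a 0 = 1"
    by (rule bfps_eqI) (auto simp: Gsser_def zetas_nil neq0_conv intro!: zetas_zero_cons
         dest!: gr0_implies_Suc)
  ultimately show ?thesis by simp
qed

lemma step_T: "vector [Fser a b c (Suc p), Gser c (Suc p)] = Tmat a b c (Suc p) *v vector [Fser a b c p, Gser c p]"
  unfolding Tmat_def mv2 using F_step[of a b c p] G_step[of c p a b] by simp

lemma step_U: "vector [Fsser a b c (Suc p), Gsser a (Suc p)] = Umat a b c (Suc p) *v vector [Fsser a b c p, Gsser a p]"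
proof -
  define A where "A = 1 - bX * bconst (1 / real (Suc p) ^ c)"
  define B where "B = 1 - bY * bconst (1 / real (Suc p) ^ a)"
  define rb where "rb = bconst (1 / real (Suc p) ^ b)"
  have A0: "fps_nth (fps_nth A 0) 0 \<noteq> 0" unfolding A_def
    by (simp del: fps_mult_nth_0 of_nat_Suc)
  have B0: "fps_nth (fps_nth B 0) 0 \<noteq> 0" unfolding B_def
    by (simp del: fps_mult_nth_0 of_nat_Suc)
  have iA: "inverse A * A = 1" using binv'[OF A0] .
  have iB: "inverse B * B = 1" using binv'[OF B0] .
  have Gs: "B * Gsser a (Suc p) = Gsser a p" using Gs_step[where a=a and p=p] by (simp add: B_def)
  have Fs: "A * Fsser a b c (Suc p) = Fsser a b c p + rb * Gsser a (Suc p)"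
    using Fs_step[where a=a and b=b and c=c and p=p] by (simp add: A_def rb_def)
  have G: "Gsser a (Suc p) = inverse B * Gsser a p"
    by (metis Gs iB mult.assoc mult_1_left)
  have F: "Fsser a b c (Suc p) = inverse A * (Fsser a b c p + rb * Gsser a (Suc p))"
    by (metis Fs iA mult.assoc mult_1_left)
  have e1: "inverse A * inverse B * B * Fsser a b c p + inverse A * inverse B * rb * Gsser a p
      = Fsser a b c (Suc p)"
  proof -
    have "inverse A * inverse B * B * Fsser a b c p + inverse A * inverse B * rb * Gsser a p
       = inverse A * (inverse B * B) * Fsser a b c p + inverse A * (rb * (inverse B * Gsser a p))"
      by (simp add: ac_simps)
    also have "\<dots> = inverse A * (Fsser a b c p + rb * Gsser a (Suc p))"
      by (simp add: iB G[symmetric] ring_distribs)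
    finally show ?thesis using F by simp
  qed
  have e2: "inverse A * inverse B * 0 * Fsser a b c p + inverse A * inverse B * A * Gsser a p
      = Gsser a (Suc p)"
  proof -
    have "inverse A * inverse B * 0 * Fsser a b c p + inverse A * inverse B * A * Gsser a p
       = (inverse A * A) * (inverse B * Gsser a p)"
      by (simp add: ac_simps)
    then show ?thesis using iA G by simp
  qed
  show ?thesis
    unfolding Umat_def Let_def mv2
    using e1 e2 by (simp add: A_def B_def rb_def del: of_nat_Suc)
qed

theorem lemma2p1:
  fixes a b c p :: nat
  assumes "a > 0" "b > 0" "c > 0"
  shows "(vector [Fser a b c p, Gser c p] :: bfps^2)
           = matprod_down (Tmat a b c) p *v vector [0, 1]
       \<and> (vector [Fsser a b c p, Gsser a p] :: bfps^2)
           = matprod_down (Umat a b c) p *v vector [0, 1]"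
proof (induction p)
  case 0
  then show ?case using base_T base_U by simp
next
  case (Suc p)
  then show ?case
    by (simp add: step_T step_U matrix_vector_mul_assoc[symmetric] del: of_nat_Suc)
qed

end
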